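(* Let $S$ be a poset and let $S\otimes_i G_i$ and $S\otimes_i H_i$ be terminating ordered joins in the same shape $S$. If $G_i\simeq_1 H_i$ for every $i\in S$, then $S\otimes_i G_i\simeq_1 S\otimes_i H_i$.
   Context: All games are impartial combinatorial games under normal play; a game is determined by its set of options, and $G \to G'$ means $G'$ is an option of $G$. A game is terminating if it admits no infinite sequence of moves. $\mathbf{0}$ denotes the game with no options. The Grundy number of a terminating game $G$ is the ordinal $\Gamma_0(G)=\operatorname{mex}\{\Gamma_0(G') : G\to G'\}$, where $\operatorname{mex}\Lambda$ is the least ordinal not in the set of ordinals $\Lambda$. The Grundy set of a terminating game $G$ is $\Gamma_1(G)=\{\Gamma_0(G') : G\to G'\}$. Games $G,H$ are $1$-equivalent, $G\simeq_1 H$, if $\Gamma_1(G)=\Gamma_1(H)$. Ordered join: for a poset $S$ and a family $(G_i)_{i\in S}$ of games, $S \otimes_i G_i$ is the game whose options are exactly the ordered joins $S \otimes_i G'_i$ obtained by choosing one $i_0\in S$ and an option $G_{i_0}\to G'_{i_0}$, and setting $G'_i=\mathbf{0}$ for all $i>i_0$ and $G'_i=G_i$ for all other $i\ne i_0$. *)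

theory Defs
  imports Main
begin

text \<open>Impartial games are modelled as positions in a move graph M :: 'p => 'p => bool
  (M x y means y is an option of x).  Grundy values of positions of type 'p are taken in a
  fixed well-order on the type 'p set, which (by Cantor) is longer than any Grundy ordinal
  arising for positions of type 'p; equality of these values coincides with equality of the
  ordinal Grundy numbers.\<close>

definition terminating :: "('p \<Rightarrow> 'p \<Rightarrow> bool) \<Rightarrow> 'p \<Rightarrow> bool" where
  "terminating M x \<longleftrightarrow> \<not> (\<exists>f. f 0 = x \<and> (\<forall>n. M (f n) (f (Suc n))))"

definition grundy_order :: "('p set \<times> 'p set) set" where
  "grundy_order = (SOME r. Well_order r \<and> Field r = UNIV)"

definition mex :: "'p set set \<Rightarrow> 'p set" where
  "mex A = (SOME a. a \<notin> A \<and> (\<forall>b. b \<notin> A \<longrightarrow> (a, b) \<in> grundy_order))"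

definition grundy0 :: "('p \<Rightarrow> 'p \<Rightarrow> bool) \<Rightarrow> 'p \<Rightarrow> 'p set" where
  "grundy0 M = wfrec {(y, x). M x y \<and> terminating M x} (\<lambda>f x. mex (f ` {y. M x y}))"

definition grundy1 :: "('p \<Rightarrow> 'p \<Rightarrow> bool) \<Rightarrow> 'p \<Rightarrow> 'p set set" where
  "grundy1 M x = grundy0 M ` {y. M x y}"

definition equiv1 :: "('p \<Rightarrow> 'p \<Rightarrow> bool) \<Rightarrow> 'p \<Rightarrow> 'p \<Rightarrow> bool" where
  "equiv1 M x y \<longleftrightarrow> grundy1 M x = grundy1 M y"

text \<open>Ordered joins over a poset (S, r).  A position of the join is a family of component
  positions; None stands for the zero game.\<close>

definition opt_move :: "('a \<Rightarrow> 'a \<Rightarrow> bool) \<Rightarrow> 'a option \<Rightarrow> 'a \<Rightarrow> bool" where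
  "opt_move M a x' \<longleftrightarrow> (case a of None \<Rightarrow> False | Some x \<Rightarrow> M x x')"

definition join_move :: "'i set \<Rightarrow> 'i rel \<Rightarrow> ('a \<Rightarrow> 'a \<Rightarrow> bool)
    \<Rightarrow> ('i \<Rightarrow> 'a option) \<Rightarrow> ('i \<Rightarrow> 'a option) \<Rightarrow> bool" where
  "join_move S r M p q \<longleftrightarrow>
     (\<exists>i0\<in>S. \<exists>x'. opt_move M (p i0) x' \<and>
        q = (\<lambda>i. if i = i0 then Some x'
                 else if i \<in> S \<and> (i0, i) \<in> r then None
                 else p i))"

definition join_init :: "('i \<Rightarrow> 'a) \<Rightarrow> ('i \<Rightarrow> 'a option)" where
  "join_init g = (\<lambda>i. Some (g i))"

end

theory Submission
  imports Defs
begin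

lemma ord_wo: "Well_order (grundy_order :: ('p set \<times> 'p set) set) \<and> Field (grundy_order :: ('p set \<times> 'p set) set) = UNIV"
  unfolding grundy_order_def by (rule someI_ex[OF well_ordering])

lemma mex_ex:
  fixes f :: "'p \<Rightarrow> 'p set"
  shows "\<exists>a. a \<notin> f ` X \<and> (\<forall>b. b \<notin> f ` X \<longrightarrow> (a, b) \<in> grundy_order)"
proof -
  let ?o = "grundy_order :: ('p set \<times> 'p set) set"
  have wo: "Well_order ?o" and fld: "Field ?o = UNIV" using ord_wo by auto
  have "\<not> surj f" using Cantors_theorem[of UNIV] by auto
  then obtain c where "c \<notin> range f" by blast
  then have c: "c \<notin> f ` X" by blast
  have wf: "wf (?o - Id)" using wo unfolding well_order_on_def by auto
  obtain a where a: "a \<in> - (f ` X)" and amin: "\<forall>b. (b, a) \<in> ?o - Id \<longrightarrow> b \<notin> - (f ` X)"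
    using wfE_min[OF wf, of c "- (f ` X)"] c by auto
  have tot: "\<forall>x y. x \<noteq> y \<longrightarrow> (x,y) \<in> ?o \<or> (y,x) \<in> ?o"
    using wo fld unfolding well_order_on_def linear_order_on_def total_on_def by auto
  have refl: "\<forall>x. (x,x) \<in> ?o"
    using wo fld unfolding well_order_on_def linear_order_on_def partial_order_on_def preorder_on_def refl_on_def by auto
  show ?thesis
  proof (intro exI conjI allI impI)
    show "a \<notin> f ` X" using a by auto
    fix b assume "b \<notin> f ` X"
    then show "(a, b) \<in> ?o" using amin tot refl by (metis ComplI Diff_iff IdD)
  qed
qed

lemma mex_notin: fixes f :: "'p \<Rightarrow> 'p set" shows "mex (f ` X) \<notin> f ` X"
  unfolding mex_def using someI_ex[OF mex_ex[of f X]] by blast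

lemma mex_le: fixes f :: "'p \<Rightarrow> 'p set" shows "b \<notin> f ` X \<Longrightarrow> (mex (f ` X), b) \<in> grundy_order"
  unfolding mex_def using someI_ex[OF mex_ex[of f X]] by blast

lemma ord_antisym: "(a, b) \<in> grundy_order \<Longrightarrow> (b, a) \<in> grundy_order \<Longrightarrow> a = b"
  using ord_wo unfolding well_order_on_def linear_order_on_def partial_order_on_def antisym_def by blast

lemma ord_total: "a \<noteq> b \<Longrightarrow> (a, b) \<in> grundy_order \<or> (b, a) \<in> grundy_order"
  using ord_wo unfolding well_order_on_def linear_order_on_def total_on_def by (metis UNIV_I)

lemma below_mex: fixes f :: "'p \<Rightarrow> 'p set" shows "(c, mex (f ` X)) \<in> grundy_order \<Longrightarrow> c \<noteq> mex (f ` X) \<Longrightarrow> c \<in> f ` X"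
  using mex_le ord_antisym by blast

lemma term_step: assumes "terminating M x" "M x y" shows "terminating M y"
  unfolding terminating_def
proof
  assume "\<exists>f. f 0 = y \<and> (\<forall>n. M (f n) (f (Suc n)))"
  then obtain f where f: "f 0 = y" "\<forall>n. M (f n) (f (Suc n))" by blast
  let ?g = "\<lambda>n. case n of 0 \<Rightarrow> x | Suc m \<Rightarrow> f m"
  have "\<forall>n. M (?g n) (?g (Suc n))" using f assms(2) by (auto split: nat.split)
  moreover have "?g 0 = x" by simp
  ultimately show False using assms(1) unfolding terminating_def by blast
qed

definition tr :: "('p \<Rightarrow> 'p \<Rightarrow> bool) \<Rightarrow> ('p \<times> 'p) set" where
  "tr M = {(y, x). M x y \<and> terminating M x}"

lemma wf_tr: "wf (tr M)"
  unfolding wf_iff_no_infinite_down_chain tr_def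
proof
  assume "\<exists>f. \<forall>i. (f (Suc i), f i) \<in> {(y, x). M x y \<and> terminating M x}"
  then obtain f where f: "\<forall>i. M (f i) (f (Suc i))" "terminating M (f 0)" by auto
  then show False unfolding terminating_def by blast
qed

lemma grundy0_eq: "terminating M x \<Longrightarrow> grundy0 M x = mex (grundy1 M x)"
  unfolding grundy1_def grundy0_def
  apply (subst wfrec[OF wf_tr[unfolded tr_def]])
  apply (rule arg_cong[where f=mex])
  apply (auto simp: cut_apply)
  done


definition upd :: "'i set \<Rightarrow> 'i rel \<Rightarrow> ('i \<Rightarrow> 'a option) \<Rightarrow> 'i \<Rightarrow> 'a \<Rightarrow> ('i \<Rightarrow> 'a option)" where
  "upd S r P j x = (\<lambda>i. if i = j then Some x else if i \<in> S \<and> (j, i) \<in> r then None else P i)"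

definition topc :: "'i set \<Rightarrow> 'i rel \<Rightarrow> ('i \<Rightarrow> 'a option) \<Rightarrow> 'i \<Rightarrow> bool" where
  "topc S r P i \<longleftrightarrow> (\<forall>l\<in>S. (i, l) \<in> r \<and> l \<noteq> i \<longrightarrow> P l = None)"

definition crel :: "'i set \<Rightarrow> 'i rel \<Rightarrow> ('a \<Rightarrow> 'a \<Rightarrow> bool) \<Rightarrow> ('i \<Rightarrow> 'a option) \<Rightarrow> ('i \<Rightarrow> 'a option) \<Rightarrow> bool" where
  "crel S r M P Q \<longleftrightarrow> (\<forall>i\<in>S. (P i = None \<and> Q i = None) \<or>
     (\<exists>x y. P i = Some x \<and> Q i = Some y \<and> (grundy1 M x = grundy1 M y \<or>
        (grundy0 M x = grundy0 M y \<and> topc S r P i \<and> topc S r Q i))))"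

lemma crel_sym: "crel S r M P Q \<Longrightarrow> crel S r M Q P"
  unfolding crel_def by metis

lemma opt_move_iff: "opt_move M a x' \<longleftrightarrow> (\<exists>x. a = Some x \<and> M x x')"
  unfolding opt_move_def by (cases a) auto

lemma jm_iff: "join_move S r M P Q \<longleftrightarrow> (\<exists>j\<in>S. \<exists>x x'. P j = Some x \<and> M x x' \<and> Q = upd S r P j x')"
  unfolding join_move_def upd_def opt_move_iff by blast

lemma upd_upd: "upd S r (upd S r P j a) j b = upd S r P j b"
  unfolding upd_def by auto

lemma upd_self: "P j = Some y \<Longrightarrow> topc S r P j \<Longrightarrow> upd S r P j y = P"
  unfolding upd_def topc_def by auto

lemma comp_term:
  assumes "terminating (join_move S r M) P" "j \<in> S" "P j = Some x"
  shows "terminating M x"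
  unfolding terminating_def
proof
  assume "\<exists>f. f 0 = x \<and> (\<forall>n. M (f n) (f (Suc n)))"
  then obtain f where f: "f 0 = x" "\<forall>n. M (f n) (f (Suc n))" by blast
  define F where "F n = (if n = 0 then P else upd S r P j (f n))" for n
  have Fj: "F n j = Some (f n)" for n using assms(3) f(1) by (auto simp: F_def upd_def)
  have "upd S r (F n) j (f (Suc n)) = F (Suc n)" for n
    by (cases n) (auto simp: F_def upd_upd)
  then have "\<forall>n. join_move S r M (F n) (F (Suc n))"
    using Fj f(2) assms(2) unfolding jm_iff by metis
  moreover have "F 0 = P" by (simp add: F_def)
  ultimately show False using assms(1) unfolding terminating_def by blast
qed

lemma crel_upd:
  assumes "crel S r M P Q" "j \<in> S" "P j = Some x" "Q j = Some y" "grundy0 M a = grundy0 M b"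
  shows "crel S r M (upd S r P j a) (upd S r Q j b)"
  unfolding crel_def
proof
  fix i assume i: "i \<in> S"
  show "(upd S r P j a i = None \<and> upd S r Q j b i = None) \<or>
     (\<exists>x y. upd S r P j a i = Some x \<and> upd S r Q j b i = Some y \<and> (grundy1 M x = grundy1 M y \<or>
        (grundy0 M x = grundy0 M y \<and> topc S r (upd S r P j a) i \<and> topc S r (upd S r Q j b) i)))"
  proof (cases "i = j")
    case True
    then show ?thesis using assms(5) by (auto simp: upd_def topc_def)
  next
    case False
    show ?thesis
    proof (cases "(j, i) \<in> r")
      case True
      then show ?thesis using False i by (auto simp: upd_def)
    next
      case nr: False
      have eqP: "upd S r P j a i = P i" "upd S r Q j b i = Q i" using False nr by (auto simp: upd_def)
      have tP: "topc S r (upd S r P j a) i" if "topc S r P i" 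
        using that assms(2,3) unfolding topc_def upd_def by auto
      have tQ: "topc S r (upd S r Q j b) i" if "topc S r Q i" 
        using that assms(2,4) unfolding topc_def upd_def by auto
      show ?thesis using assms(1) i unfolding eqP crel_def using tP tQ by blast
    qed
  qed
qed


lemma side:
  assumes tP: "terminating (join_move S r M) P" and tQ: "terminating (join_move S r M) Q"
    and C: "crel S r M P Q"
    and H1: "\<forall>P' Q'. join_move S r M P P' \<longrightarrow> join_move S r M Q Q' \<longrightarrow> crel S r M P' Q'
               \<longrightarrow> grundy0 (join_move S r M) P' = grundy0 (join_move S r M) Q'"
    and H2: "\<forall>P' P''. join_move S r M P P' \<longrightarrow> join_move S r M P' P'' \<longrightarrow> crel S r M P'' Q
               \<longrightarrow> grundy0 (join_move S r M) P'' = grundy0 (join_move S r M) Q"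
    and mv: "join_move S r M P P'"
  shows "grundy0 (join_move S r M) P' \<in> grundy1 (join_move S r M) Q
         \<or> grundy0 (join_move S r M) P' \<noteq> grundy0 (join_move S r M) Q"
proof -
  let ?J = "join_move S r M"
  obtain j x x' where j: "j \<in> S" and Pj: "P j = Some x" and xx: "M x x'" and P': "P' = upd S r P j x'"
    using mv unfolding jm_iff by blast
  obtain y where Qj: "Q j = Some y" and cj: "grundy1 M x = grundy1 M y \<or>
        (grundy0 M x = grundy0 M y \<and> topc S r P j \<and> topc S r Q j)"
    using C j Pj unfolding crel_def by force
  have tx: "terminating M x" using comp_term[OF tP j Pj] .
  have ty: "terminating M y" using comp_term[OF tQ j Qj] .
  have tx': "terminating M x'" using term_step[OF tx xx] .
  have tP': "terminating ?J P'" using term_step[of ?J P P', OF tP mv] .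
  have gx'x: "grundy0 M x' \<in> grundy1 M x" using xx unfolding grundy1_def by blast
  show ?thesis
  proof (cases "grundy0 M x' \<in> grundy1 M y")
    case True
    then obtain y' where yy: "M y y'" and gy': "grundy0 M y' = grundy0 M x'"
      unfolding grundy1_def by auto
    define Q' where "Q' = upd S r Q j y'"
    have mQ: "?J Q Q'" unfolding jm_iff Q'_def using j Qj yy by blast
    have "crel S r M P' Q'" unfolding P' Q'_def by (rule crel_upd[OF C j Pj Qj gy'[symmetric]])
    then have "grundy0 ?J P' = grundy0 ?J Q'" using H1 mv mQ by blast
    then show ?thesis using mQ unfolding grundy1_def by blast
  next
    case False
    then have c0: "grundy0 M x = grundy0 M y" and topP: "topc S r P j" and topQ: "topc S r Q j"
      using cj gx'x by auto
    have gx: "grundy0 M x = mex (grundy0 M ` {z. M x z})" using grundy0_eq[OF tx] unfolding grundy1_def .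
    have gy: "grundy0 M y = mex (grundy0 M ` {z. M y z})" using grundy0_eq[OF ty] unfolding grundy1_def .
    have gx': "grundy0 M x' = mex (grundy0 M ` {z. M x' z})" using grundy0_eq[OF tx'] unfolding grundy1_def .
    have ne: "grundy0 M x \<noteq> grundy0 M x'"
      using mex_notin[of "grundy0 M" "{z. M x z}"] gx gx'x unfolding grundy1_def by auto
    have le: "(grundy0 M x, grundy0 M x') \<in> grundy_order"
      using mex_le[of "grundy0 M x'" "grundy0 M" "{z. M y z}"] False gy c0 unfolding grundy1_def by auto
    have "grundy0 M x \<in> grundy0 M ` {z. M x' z}"
      using below_mex[of "grundy0 M x" "grundy0 M" "{z. M x' z}"] le ne gx' by auto
    then obtain x'' where xx': "M x' x''" and gx'': "grundy0 M x'' = grundy0 M y" using c0 by auto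
    define P'' where "P'' = upd S r P j x''"
    have P''2: "P'' = upd S r P' j x''" unfolding P''_def P' upd_upd ..
    have mP': "?J P' P''" unfolding jm_iff P''2 using j xx' by (auto simp: P' upd_def)
    have "crel S r M P'' (upd S r Q j y)" unfolding P''_def by (rule crel_upd[OF C j Pj Qj gx''])
    then have "crel S r M P'' Q" using upd_self[OF Qj topQ] by simp
    then have eq: "grundy0 ?J P'' = grundy0 ?J Q" using H2 mv mP' by blast
    have "grundy0 ?J P' = mex (grundy0 ?J ` {z. ?J P' z})" using grundy0_eq[OF tP'] unfolding grundy1_def .
    moreover have "grundy0 ?J P'' \<in> grundy0 ?J ` {z. ?J P' z}" using mP' by blast
    ultimately have "grundy0 ?J P' \<noteq> grundy0 ?J P''" using mex_notin[of "grundy0 ?J" "{z. ?J P' z}"] by auto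
    then show ?thesis using eq by simp
  qed
qed


lemma combine:
  fixes G :: "'p \<Rightarrow> 'p set"
  assumes "\<forall>P'\<in>X. G P' \<in> G ` Y \<or> G P' \<noteq> mex (G ` Y)"
    and "\<forall>Q'\<in>Y. G Q' \<in> G ` X \<or> G Q' \<noteq> mex (G ` X)"
  shows "mex (G ` X) = mex (G ` Y)"
proof -
  have "mex (G ` X) \<notin> G ` Y" using assms(2) mex_notin[of G X] by auto
  then have 1: "(mex (G ` Y), mex (G ` X)) \<in> grundy_order" by (rule mex_le)
  have "mex (G ` Y) \<notin> G ` X" using assms(1) mex_notin[of G Y] by auto
  then have 2: "(mex (G ` X), mex (G ` Y)) \<in> grundy_order" by (rule mex_le)
  show ?thesis using ord_antisym[OF 1 2] by simp
qed

lemma tr_step: "terminating M x \<Longrightarrow> M x y \<Longrightarrow> (y, x) \<in> (tr M)\<^sup>+"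
  unfolding tr_def by auto

lemma main:
  "\<forall>P. terminating (join_move S r M) P \<longrightarrow> (\<forall>Q. terminating (join_move S r M) Q \<longrightarrow> crel S r M P Q
     \<longrightarrow> grundy0 (join_move S r M) P = grundy0 (join_move S r M) Q)"
proof
  let ?J = "join_move S r M"
  let ?G = "grundy0 ?J"
  fix P
  show "terminating ?J P \<longrightarrow> (\<forall>Q. terminating ?J Q \<longrightarrow> crel S r M P Q \<longrightarrow> ?G P = ?G Q)"
  proof (induction P rule: wf_induct[OF wf_trancl[OF wf_tr[of ?J]]])
    case (1 P)
    note IHo = "1.IH"
    show ?case
    proof (rule impI, rule allI)
      assume tP: "terminating ?J P"
      fix Q
      show "terminating ?J Q \<longrightarrow> crel S r M P Q \<longrightarrow> ?G P = ?G Q"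
      proof (induction Q rule: wf_induct[OF wf_trancl[OF wf_tr[of ?J]]])
        case (1 Q)
        note IHi = "1.IH"
        show ?case
        proof (intro impI)
          assume tQ: "terminating ?J Q" and C: "crel S r M P Q"
          have H1: "\<forall>P' Q'. ?J P P' \<longrightarrow> ?J Q Q' \<longrightarrow> crel S r M P' Q' \<longrightarrow> ?G P' = ?G Q'"
            using IHo tr_step[of ?J P, OF tP] term_step[of ?J P] term_step[of ?J Q] tQ tP by blast
          have H2: "\<forall>P' P''. ?J P P' \<longrightarrow> ?J P' P'' \<longrightarrow> crel S r M P'' Q \<longrightarrow> ?G P'' = ?G Q"
          proof (intro allI impI)
            fix P' P'' assume m1: "?J P P'" and m2: "?J P' P''" and c: "crel S r M P'' Q"
            have tP': "terminating ?J P'" using term_step[of ?J P P', OF tP m1] .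
            have tP'': "terminating ?J P''" using term_step[of ?J P' P'', OF tP' m2] .
            have "(P'', P) \<in> (tr ?J)\<^sup>+" using tr_step[of ?J _ _, OF tP m1] tr_step[of ?J _ _, OF tP' m2] by auto
            then show "?G P'' = ?G Q" using IHo tP'' tQ c by blast
          qed
          have H1': "\<forall>Q' P'. ?J Q Q' \<longrightarrow> ?J P P' \<longrightarrow> crel S r M Q' P' \<longrightarrow> ?G Q' = ?G P'"
            using H1 crel_sym by metis
          have H2': "\<forall>Q' Q''. ?J Q Q' \<longrightarrow> ?J Q' Q'' \<longrightarrow> crel S r M Q'' P \<longrightarrow> ?G Q'' = ?G P"
          proof (intro allI impI)
            fix Q' Q'' assume m1: "?J Q Q'" and m2: "?J Q' Q''" and c: "crel S r M Q'' P"
            have tQ': "terminating ?J Q'" using term_step[of ?J Q Q', OF tQ m1] .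
            have tQ'': "terminating ?J Q''" using term_step[of ?J Q' Q'', OF tQ' m2] .
            have "(Q'', Q) \<in> (tr ?J)\<^sup>+" using tr_step[of ?J _ _, OF tQ m1] tr_step[of ?J _ _, OF tQ' m2] by auto
            then show "?G Q'' = ?G P" using IHi tQ'' crel_sym[OF c] by metis
          qed
          have s1: "\<forall>P'\<in>{z. ?J P z}. ?G P' \<in> ?G ` {z. ?J Q z} \<or> ?G P' \<noteq> mex (?G ` {z. ?J Q z})"
            using side[OF tP tQ C H1 H2] grundy0_eq[OF tQ] unfolding grundy1_def by auto
          have s2: "\<forall>Q'\<in>{z. ?J Q z}. ?G Q' \<in> ?G ` {z. ?J P z} \<or> ?G Q' \<noteq> mex (?G ` {z. ?J P z})"
            using side[OF tQ tP crel_sym[OF C] H1' H2'] grundy0_eq[OF tP] unfolding grundy1_def by auto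
          show "?G P = ?G Q" using combine[OF s1 s2] grundy0_eq[OF tP] grundy0_eq[OF tQ]
            unfolding grundy1_def by simp
        qed
      qed
    qed
  qed
qed

lemma half:
  assumes tg: "terminating (join_move S r M) (join_init g)"
    and th: "terminating (join_move S r M) (join_init h)"
    and eq: "\<forall>i\<in>S. grundy1 M (g i) = grundy1 M (h i)"
  shows "grundy1 (join_move S r M) (join_init g) \<subseteq> grundy1 (join_move S r M) (join_init h)"
proof
  let ?J = "join_move S r M"
  fix v assume "v \<in> grundy1 ?J (join_init g)"
  then obtain P' where mv: "?J (join_init g) P'" and v: "v = grundy0 ?J P'"
    unfolding grundy1_def by auto
  obtain j x x' where j: "j \<in> S" and Pj: "join_init g j = Some x" and xx: "M x x'"
    and P': "P' = upd S r (join_init g) j x'"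
    using mv unfolding jm_iff by blast
  have x: "x = g j" using Pj by (simp add: join_init_def)
  have "grundy0 M x' \<in> grundy1 M (h j)" using eq j xx x unfolding grundy1_def by blast
  then obtain y' where yy: "M (h j) y'" and gy: "grundy0 M y' = grundy0 M x'" unfolding grundy1_def by auto
  define Q' where "Q' = upd S r (join_init h) j y'"
  have mQ: "?J (join_init h) Q'" unfolding jm_iff Q'_def using j yy by (auto simp: join_init_def)
  have C0: "crel S r M (join_init g) (join_init h)" using eq unfolding crel_def join_init_def by auto
  have C: "crel S r M P' Q'" unfolding P' Q'_def
    by (rule crel_upd[OF C0 j Pj _ gy[symmetric]]) (simp add: join_init_def)
  have "grundy0 ?J P' = grundy0 ?J Q'"
    using main term_step[of ?J _ P', OF tg mv] term_step[of ?J _ Q', OF th mQ] C by blast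
  then show "v \<in> grundy1 ?J (join_init h)" using v mQ unfolding grundy1_def by blast
qed

theorem mainTheorem5:
  fixes S :: "'i set" and r :: "'i rel" and M :: "'a \<Rightarrow> 'a \<Rightarrow> bool"
    and g h :: "'i \<Rightarrow> 'a"
  assumes "partial_order_on S r"
    and "terminating (join_move S r M) (join_init g)"
    and "terminating (join_move S r M) (join_init h)"
    and "\<forall>i\<in>S. equiv1 M (g i) (h i)"
  shows "equiv1 (join_move S r M) (join_init g) (join_init h)"
  unfolding equiv1_def
  using half[OF assms(2,3)] half[OF assms(3,2)] assms(4) unfolding equiv1_def by (metis subset_antisym)

end
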